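(* Assume the setting described in the context, so in particular $\tilde\lambda_{s,k}\neq1$ for $s=a,b$ and all $k=1,\dots,d$. Fix $j\in\{1,\dots,d\}$ and integers $L\ge\ell\ge2$, and let $0\le m<n$ be integers with $n-m\ge2$. Put $\Lambda'=\Lambda^{(j)}_n\setminus\Lambda^{(j)}_m$. Then $$C(\Lambda',ab)\le C(\Lambda',a)\,C(\Lambda',b)\le \tilde c\,C(\Lambda',ab),$$ where $$\tilde c:=\Bigl(1-\prod_{k=1}^d\bigl(\max\{1+e^{-2|\log\tilde\lambda_{a,k}|},\,1+e^{-2|\log\tilde\lambda_{b,k}|}\}\bigr)^{-1}\Bigr)^{-1}.$$
   Context: Let $\lambda_{s,k}>0$ ($s\in\{a,b\}$, $k=1,\dots,d$), $\lambda_s^x:=\prod_k\lambda_{s,k}^{x_k}$ for $x\in\mathbb{Z}^d$, and for finite $\Lambda\subset\mathbb{Z}^d$ let $C(\Lambda,s):=\sum_{x\in\Lambda}\lambda_s^{2x}$ and $C(\Lambda,ab):=\sum_{x,y\in\Lambda,\,x\neq y}\lambda_a^{2x}\lambda_b^{2y}$. Volumes $\Lambda_{\vec L}$, $\vec L=(L_1,\dots,L_d)\in\mathbb{N}^d$, are defined in one of two ways. Case 1 ($\lambda_{a,1}\ne1$, $\lambda_{b,1}\ne1$): choose integers $v(k)\ge0$, $k=2,\dots,d$, with $\tilde\lambda_{s,k}:=\lambda_{s,k}\lambda_{s,1}^{-v(k)}\ne1$ for $s=a,b$, set $\tilde\lambda_{s,1}:=\lambda_{s,1}$, and $\Lambda_{\vec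 L}:=\{x\in\mathbb{Z}^d: 0\le x_1+\sum_{k\ge2}v(k)x_k\le L_1-1,\ 0\le x_k\le L_k-1\ (k\ge2)\}$. Case 2 ($d\ge2$, $\lambda_{a,1}\ne1$, $\lambda_{b,2}\ne1$, $\lambda_{a,2}=\lambda_{b,1}=1$): set $\tilde\lambda_{a,1}:=\lambda_{a,1}$, $\tilde\lambda_{a,2}:=\lambda_{a,1}^{-1}$, $\tilde\lambda_{b,1}=\tilde\lambda_{b,2}:=\lambda_{b,2}$, choose integers $v(k)\ge0$, $k\ge3$, with $\tilde\lambda_{s,k}:=\lambda_{s,k}\tilde\lambda_{s,1}^{-v(k)}\ne1$, and $\Lambda_{\vec L}:=\{x\in\mathbb{Z}^d: 0\le \tfrac{x_1+x_2}{2}+\sum_{k\ge3}v(k)x_k\le L_1-\tfrac12,\ 0\le\tfrac{x_2-x_1}{2}\le L_2-\tfrac12,\ 0\le x_k\le L_k-1\ (k\ge3)\}$. For fixed $j$, $L$, $\ell$ and integer $n\ge0$, $\Lambda^{(j)}_n:=\Lambda_{(L,\dots,L,n,\ell,\dots,\ell)}$ with $n$ in the $j$-th entry, $L$ in entries $<j$ and $\ell$ in entries $>j$ (so $\Lambda^{(j)}_0=\emptyset$). *)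

theory Defs
  imports Complex_Main
begin

definition zd :: "nat \<Rightarrow> (nat \<Rightarrow> int) set" where
  "zd d = {x. \<forall>k. (k < 1 \<or> d < k) \<longrightarrow> x k = 0}"

definition lpow :: "nat \<Rightarrow> (nat \<Rightarrow> real) \<Rightarrow> (nat \<Rightarrow> int) \<Rightarrow> real" where
  "lpow d lam x = (\<Prod>k=1..d. lam k powi x k)"

definition Cs :: "nat \<Rightarrow> (nat \<Rightarrow> real) \<Rightarrow> (nat \<Rightarrow> int) set \<Rightarrow> real" where
  "Cs d lam Lam = (\<Sum>x\<in>Lam. lpow d lam (\<lambda>k. 2 * x k))"

definition Cab :: "nat \<Rightarrow> (nat \<Rightarrow> real) \<Rightarrow> (nat \<Rightarrow> real) \<Rightarrow> (nat \<Rightarrow> int) set \<Rightarrow> real" where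
  "Cab d la lb Lam =
     (\<Sum>(x,y)\<in>{(x,y). x \<in> Lam \<and> y \<in> Lam \<and> x \<noteq> y}.
        lpow d la (\<lambda>k. 2 * x k) * lpow d lb (\<lambda>k. 2 * y k))"

datatype vcase = Case1 | Case2

fun tla :: "vcase \<Rightarrow> (nat \<Rightarrow> real) \<Rightarrow> (nat \<Rightarrow> real) \<Rightarrow> (nat \<Rightarrow> nat) \<Rightarrow> nat \<Rightarrow> real" where
  "tla Case1 la lb v k = (if k = 1 then la 1 else la k * la 1 powi (- int (v k)))"
| "tla Case2 la lb v k = (if k = 1 then la 1 else if k = 2 then inverse (la 1)
                          else la k * la 1 powi (- int (v k)))"

fun tlb :: "vcase \<Rightarrow> (nat \<Rightarrow> real) \<Rightarrow> (nat \<Rightarrow> real) \<Rightarrow> (nat \<Rightarrow> nat) \<Rightarrow> nat \<Rightarrow> real" where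
  "tlb Case1 la lb v k = (if k = 1 then lb 1 else lb k * lb 1 powi (- int (v k)))"
| "tlb Case2 la lb v k = (if k = 1 \<or> k = 2 then lb 2
                          else lb k * lb 2 powi (- int (v k)))"

fun admissible :: "vcase \<Rightarrow> nat \<Rightarrow> (nat \<Rightarrow> real) \<Rightarrow> (nat \<Rightarrow> real) \<Rightarrow> (nat \<Rightarrow> nat) \<Rightarrow> bool" where
  "admissible Case1 d la lb v \<longleftrightarrow>
     la 1 \<noteq> 1 \<and> lb 1 \<noteq> 1 \<and>
     (\<forall>k\<in>{2..d}. tla Case1 la lb v k \<noteq> 1 \<and> tlb Case1 la lb v k \<noteq> 1)"
| "admissible Case2 d la lb v \<longleftrightarrow>
     2 \<le> d \<and> la 1 \<noteq> 1 \<and> lb 2 \<noteq> 1 \<and> la 2 = 1 \<and> lb 1 = 1 \<and>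
     (\<forall>k\<in>{3..d}. tla Case2 la lb v k \<noteq> 1 \<and> tlb Case2 la lb v k \<noteq> 1)"

fun volume :: "vcase \<Rightarrow> nat \<Rightarrow> (nat \<Rightarrow> nat) \<Rightarrow> (nat \<Rightarrow> nat) \<Rightarrow> (nat \<Rightarrow> int) set" where
  "volume Case1 d v Lv =
     {x \<in> zd d. 0 \<le> x 1 + (\<Sum>k=2..d. int (v k) * x k)
              \<and> x 1 + (\<Sum>k=2..d. int (v k) * x k) \<le> int (Lv 1) - 1
              \<and> (\<forall>k\<in>{2..d}. 0 \<le> x k \<and> x k \<le> int (Lv k) - 1)}"
| "volume Case2 d v Lv =
     {x \<in> zd d. 0 \<le> (real_of_int (x 1) + real_of_int (x 2)) / 2
                     + (\<Sum>k=3..d. real (v k) * real_of_int (x k))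
              \<and> (real_of_int (x 1) + real_of_int (x 2)) / 2
                     + (\<Sum>k=3..d. real (v k) * real_of_int (x k)) \<le> real (Lv 1) - 1/2
              \<and> 0 \<le> (real_of_int (x 2) - real_of_int (x 1)) / 2
              \<and> (real_of_int (x 2) - real_of_int (x 1)) / 2 \<le> real (Lv 2) - 1/2
              \<and> (\<forall>k\<in>{3..d}. 0 \<le> x k \<and> x k \<le> int (Lv k) - 1)}"

definition volj :: "vcase \<Rightarrow> nat \<Rightarrow> (nat \<Rightarrow> nat) \<Rightarrow> nat \<Rightarrow> nat \<Rightarrow> nat \<Rightarrow> nat \<Rightarrow> (nat \<Rightarrow> int) set" where
  "volj cs d v j L l n = volume cs d v (\<lambda>k. if k < j then L else if k = j then n else l)"

definition ctilde :: "vcase \<Rightarrow> nat \<Rightarrow> (nat \<Rightarrow> real) \<Rightarrow> (nat \<Rightarrow> real) \<Rightarrow> (nat \<Rightarrow> nat) \<Rightarrow> real" where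
  "ctilde cs d la lb v =
     inverse (1 - inverse (\<Prod>k=1..d.
        max (1 + exp (-2 * \<bar>ln (tla cs la lb v k)\<bar>)) (1 + exp (-2 * \<bar>ln (tlb cs la lb v k)\<bar>))))"

end

theory Submission
  imports Defs "HOL-Library.FuncSet"
begin

lemma powi_sum: "finite A \<Longrightarrow> (x::real) \<noteq> 0 \<Longrightarrow> x powi (\<Sum>k\<in>A. f k) = (\<Prod>k\<in>A. x powi f k)"
  by (induction A rule: finite_induct) (auto simp: power_int_add)

definition box :: "nat \<Rightarrow> (nat \<Rightarrow> int set) \<Rightarrow> (nat \<Rightarrow> int) set" where
  "box d I = {y \<in> zd d. \<forall>k\<in>{1..d}. y k \<in> I k}"

lemma box_sub: "box d I \<subseteq> (\<lambda>g k. if k \<in> {1..d} then g k else 0) ` PiE {1..d} I"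
proof
  fix y assume y: "y \<in> box d I"
  have "y = (\<lambda>k. if k \<in> {1..d} then restrict y {1..d} k else 0)"
    using y by (auto simp: box_def zd_def fun_eq_iff Suc_le_eq)
  moreover have "restrict y {1..d} \<in> PiE {1..d} I" using y by (auto simp: box_def)
  ultimately show "y \<in> (\<lambda>g k. if k \<in> {1..d} then g k else 0) ` PiE {1..d} I" by blast
qed

lemma box_finite: "(\<And>k. k \<in> {1..d} \<Longrightarrow> finite (I k)) \<Longrightarrow> finite (box d I)"
  by (rule finite_subset[OF box_sub]) (auto intro!: finite_PiE)

lemma box_sum:
  fixes f :: "nat \<Rightarrow> int \<Rightarrow> real"
  assumes "\<And>k. k \<in> {1..d} \<Longrightarrow> finite (I k)"
  shows "(\<Sum>y\<in>box d I. \<Prod>k=1..d. f k (y k)) = (\<Prod>k=1..d. \<Sum>t\<in>I k. f k t)"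
proof -
  have "(\<Prod>k=1..d. \<Sum>t\<in>I k. f k t) = (\<Sum>g\<in>PiE {1..d} I. \<Prod>k=1..d. f k (g k))"
    by (rule prod_sum_PiE) (use assms in auto)
  also have "\<dots> = (\<Sum>y\<in>box d I. \<Prod>k=1..d. f k (y k))"
  proof (rule sum.reindex_bij_witness[where i="\<lambda>y. restrict y {1..d}" and j="\<lambda>g k. if k \<in> {1..d} then g k else 0"])
    fix a assume a: "a \<in> PiE {1..d} I"
    then show "restrict (\<lambda>k. if k \<in> {1..d} then a k else 0) {1..d} = a"
      by (auto simp: PiE_def extensional_def fun_eq_iff)
    show "(\<lambda>k. if k \<in> {1..d} then a k else 0) \<in> box d I"
      using a by (auto simp: box_def zd_def)
    show "(\<Prod>k=1..d. f k (if k \<in> {1..d} then a k else 0)) = (\<Prod>k=1..d. f k (a k))"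
      by (rule prod.cong) auto
  next
    fix b assume b: "b \<in> box d I"
    then show "(\<lambda>k. if k \<in> {1..d} then restrict b {1..d} k else 0) = b"
      by (auto simp: box_def zd_def fun_eq_iff Suc_le_eq)
    show "restrict b {1..d} \<in> PiE {1..d} I" using b by (auto simp: box_def)
  qed
  finally show ?thesis by simp
qed

lemma oneD_nat:
  fixes \<alpha> \<beta> r :: real
  assumes "0 < \<alpha>" "0 < \<beta>" "0 \<le> r" "r \<le> \<alpha>" "r * \<alpha> \<le> 1" "2 \<le> N"
  shows "(1+r) * (\<Sum>t<N. (\<alpha>*\<beta>)^t) \<le> (\<Sum>t<N. \<alpha>^t) * (\<Sum>t<N. \<beta>^t)"
  using assms(6)
proof (induction N rule: nat_induct_at_least)
  case base
  have "\<alpha> * (\<beta> * r) \<le> \<beta>" using assms mult_right_mono[OF assms(5), of \<beta>] by (simp add: mult_ac)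
  then show ?case using assms by (simp add: numeral_2_eq_2 algebra_simps; linarith)
next
  case (Suc N)
  have A: "\<alpha>^(N-1) \<le> (\<Sum>t<N. \<alpha>^t)"
    using Suc(1) assms(1) by (intro member_le_sum) auto
  have "r * (\<alpha>*\<beta>)^N = (r*\<alpha>) * (\<alpha>^(N-1) * \<beta>^N)"
    using Suc(1) by (cases N) (auto simp: power_mult_distrib)
  also have "\<dots> \<le> 1 * (\<alpha>^(N-1) * \<beta>^N)"
    using assms by (intro mult_right_mono) auto
  also have "\<dots> \<le> (\<Sum>t<N. \<alpha>^t) * \<beta>^N" using A assms by (simp add: mult.commute mult_right_mono)
  finally have s1: "r * (\<alpha>*\<beta>)^N \<le> (\<Sum>t<N. \<alpha>^t) * \<beta>^N" .
  have s2: "0 \<le> \<alpha>^N * (\<Sum>t<N. \<beta>^t)" using assms by (auto intro!: sum_nonneg mult_nonneg_nonneg)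
  show ?case using Suc(2) s1 s2
    by (simp add: algebra_simps power_mult_distrib)
qed

lemma shift_sum:
  fixes x :: real and c e :: int
  assumes "x \<noteq> 0" "c \<le> e"
  shows "(\<Sum>t\<in>{c..e}. x powi (2*t)) = x powi (2*c) * (\<Sum>i<nat (e-c+1). (x^2)^i)"
proof -
  have img: "{c..e} = (\<lambda>i. c + int i) ` {..<nat (e-c+1)}"
  proof (rule set_eqI, rule iffI)
    fix t assume "t \<in> {c..e}"
    then show "t \<in> (\<lambda>i. c + int i) ` {..<nat (e-c+1)}"
      by (intro image_eqI[where x="nat (t-c)"]) auto
  qed auto
  have inj: "inj_on (\<lambda>i. c + int i) {..<nat (e-c+1)}" by (auto simp: inj_on_def)
  have "(\<Sum>t\<in>{c..e}. x powi (2*t)) = (\<Sum>i<nat (e-c+1). x powi (2*(c + int i)))"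
    by (simp add: img sum.reindex[OF inj])
  also have "\<dots> = (\<Sum>i<nat (e-c+1). x powi (2*c) * (x^2)^i)"
  proof (rule sum.cong[OF refl])
    fix i
    have "x powi (2*(c + int i)) = x powi (2*c) * x powi (int (2*i))"
      proof -
      have e: "2*(c+int i) = 2*c + int (2*i)" by simp
      show ?thesis by (subst e, subst power_int_add) (use assms in auto)
    qed
    also have "\<dots> = x powi (2*c) * (x^2)^i" by (subst power_int_of_nat) (simp add: power_mult)
    finally show "x powi (2*(c + int i)) = x powi (2*c) * (x^2)^i" .
  qed
  finally show ?thesis by (simp add: sum_distrib_left)
qed

lemma oneD_int:
  fixes a b r :: real and c e :: int
  assumes ab: "0<a" "0<b" and r: "0 \<le> r" "(r \<le> a^2 \<and> r*a^2 \<le> 1) \<or> (r \<le> b^2 \<and> r*b^2 \<le> 1)" and ce: "c < e"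
  shows "(1+r) * (\<Sum>t\<in>{c..e}. a powi (2*t) * b powi (2*t))
         \<le> (\<Sum>t\<in>{c..e}. a powi (2*t)) * (\<Sum>t\<in>{c..e}. b powi (2*t))"
proof -
  define N where "N = nat (e - c + 1)"
  have N: "2 \<le> N" using ce by (simp add: N_def)
  have eA: "(\<Sum>t\<in>{c..e}. a powi (2*t)) = a powi (2*c) * (\<Sum>i<N. (a^2)^i)"
    using shift_sum[of a c e] ab ce by (simp add: N_def)
  have eB: "(\<Sum>t\<in>{c..e}. b powi (2*t)) = b powi (2*c) * (\<Sum>i<N. (b^2)^i)"
    using shift_sum[of b c e] ab ce by (simp add: N_def)
  have "(\<Sum>t\<in>{c..e}. a powi (2*t) * b powi (2*t)) = (\<Sum>t\<in>{c..e}. (a*b) powi (2*t))"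
    by (simp add: power_int_mult_distrib)
  also have "\<dots> = (a*b) powi (2*c) * (\<Sum>i<N. (a^2*b^2)^i)"
    using shift_sum[of "a*b" c e] ab ce by (simp add: N_def power_mult_distrib)
  finally have eD: "(\<Sum>t\<in>{c..e}. a powi (2*t) * b powi (2*t)) = a powi (2*c) * b powi (2*c) * (\<Sum>i<N. (a^2*b^2)^i)"
    by (simp add: power_int_mult_distrib)
  have key: "(1+r) * (\<Sum>i<N. (a^2*b^2)^i) \<le> (\<Sum>i<N. (a^2)^i) * (\<Sum>i<N. (b^2)^i)"
    using r(2)
  proof
    assume h: "r \<le> a^2 \<and> r*a^2 \<le> 1"
    show ?thesis using oneD_nat[of "a^2" "b^2" r N] h ab r N by auto
  next
    assume h: "r \<le> b^2 \<and> r*b^2 \<le> 1"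
    show ?thesis using oneD_nat[of "b^2" "a^2" r N] h ab r N by (auto simp: mult.commute)
  qed
  have K: "0 \<le> a powi (2*c) * b powi (2*c)" using ab by simp
  show ?thesis
    unfolding eA eB eD using mult_left_mono[OF key K] by (simp add: mult_ac)
qed

lemma exp_bound:
  fixes a :: real assumes "0 < a"
  shows "exp (-2 * \<bar>ln a\<bar>) \<le> a^2 \<and> exp (-2 * \<bar>ln a\<bar>) * a^2 \<le> 1"
proof -
  have "exp (2*ln a) = exp (ln (a^2))" using assms by (simp add: ln_realpow)
  also have "\<dots> = a^2" using assms by simp
  finally have a2: "a^2 = exp (2 * ln a)" by simp
  show ?thesis unfolding a2 by (simp add: exp_add[symmetric]) arith
qed

lemma factor_ineq:
  fixes a b :: real and c e :: int
  assumes ab: "0<a" "0<b" and ce: "c < e"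
  shows "max (1 + exp (-2 * \<bar>ln a\<bar>)) (1 + exp (-2 * \<bar>ln b\<bar>)) * (\<Sum>t\<in>{c..e}. a powi (2*t) * b powi (2*t))
         \<le> (\<Sum>t\<in>{c..e}. a powi (2*t)) * (\<Sum>t\<in>{c..e}. b powi (2*t))"
proof -
  define r where "r = max (exp (-2 * \<bar>ln a\<bar>)) (exp (-2 * \<bar>ln b\<bar>))"
  have eq: "max (1 + exp (-2 * \<bar>ln a\<bar>)) (1 + exp (-2 * \<bar>ln b\<bar>)) = 1 + r"
    by (simp add: r_def max_def)
  have "(r \<le> a^2 \<and> r*a^2 \<le> 1) \<or> (r \<le> b^2 \<and> r*b^2 \<le> 1)"
    using exp_bound[OF ab(1)] exp_bound[OF ab(2)] by (auto simp: r_def max_def)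
  moreover have "0 \<le> r" by (simp add: r_def le_max_iff_disj)
  ultimately show ?thesis unfolding eq using oneD_int[OF ab _ _ ce] by blast
qed


lemma box_ineq:
  fixes ta tb :: "nat \<Rightarrow> real" and c e :: "nat \<Rightarrow> int"
  assumes as: "\<forall>k\<in>{1..d}. 0 < ta k \<and> 0 < tb k \<and> c k < e k"
  shows "(\<Prod>k=1..d. max (1 + exp (-2*\<bar>ln (ta k)\<bar>)) (1 + exp (-2*\<bar>ln (tb k)\<bar>)))
           * (\<Sum>y\<in>box d (\<lambda>k. {c k..e k}). (\<Prod>k=1..d. ta k powi (2*y k)) * (\<Prod>k=1..d. tb k powi (2*y k)))
     \<le> (\<Sum>y\<in>box d (\<lambda>k. {c k..e k}). \<Prod>k=1..d. ta k powi (2*y k))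
        * (\<Sum>y\<in>box d (\<lambda>k. {c k..e k}). \<Prod>k=1..d. tb k powi (2*y k))"
proof -
  define f where "f k = max (1 + exp (-2*\<bar>ln (ta k)\<bar>)) (1 + exp (-2*\<bar>ln (tb k)\<bar>))" for k
  have fin: "\<And>k. k \<in> {1..d} \<Longrightarrow> finite {c k..e k}" by simp
  have eA: "(\<Sum>y\<in>box d (\<lambda>k. {c k..e k}). \<Prod>k=1..d. ta k powi (2*y k)) = (\<Prod>k=1..d. \<Sum>t\<in>{c k..e k}. ta k powi (2*t))"
    using box_sum[OF fin, where f="\<lambda>k t. ta k powi (2*t)"] by simp
  have eB: "(\<Sum>y\<in>box d (\<lambda>k. {c k..e k}). \<Prod>k=1..d. tb k powi (2*y k)) = (\<Prod>k=1..d. \<Sum>t\<in>{c k..e k}. tb k powi (2*t))"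
    using box_sum[OF fin, where f="\<lambda>k t. tb k powi (2*t)"] by simp
  have eD: "(\<Sum>y\<in>box d (\<lambda>k. {c k..e k}). (\<Prod>k=1..d. ta k powi (2*y k)) * (\<Prod>k=1..d. tb k powi (2*y k)))
       = (\<Prod>k=1..d. \<Sum>t\<in>{c k..e k}. ta k powi (2*t) * tb k powi (2*t))"
    using box_sum[OF fin, where f="\<lambda>k t. ta k powi (2*t) * tb k powi (2*t)"] by (simp add: prod.distrib)
  have "(\<Prod>k=1..d. f k) * (\<Prod>k=1..d. \<Sum>t\<in>{c k..e k}. ta k powi (2*t) * tb k powi (2*t))
      = (\<Prod>k=1..d. f k * (\<Sum>t\<in>{c k..e k}. ta k powi (2*t) * tb k powi (2*t)))"
    by (simp add: prod.distrib)
  also have "\<dots> \<le> (\<Prod>k=1..d. (\<Sum>t\<in>{c k..e k}. ta k powi (2*t)) * (\<Sum>t\<in>{c k..e k}. tb k powi (2*t)))"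
  proof (rule prod_mono, rule conjI)
    fix k assume k: "k \<in> {1..d}"
    have p: "0 < ta k" "0 < tb k" "c k < e k" using as k by auto
    show "0 \<le> f k * (\<Sum>t\<in>{c k..e k}. ta k powi (2*t) * tb k powi (2*t))"
      using p by (auto simp: f_def intro!: mult_nonneg_nonneg sum_nonneg le_max_iff_disj[THEN iffD2])
    show "f k * (\<Sum>t\<in>{c k..e k}. ta k powi (2*t) * tb k powi (2*t))
        \<le> (\<Sum>t\<in>{c k..e k}. ta k powi (2*t)) * (\<Sum>t\<in>{c k..e k}. tb k powi (2*t))"
      unfolding f_def by (rule factor_ineq[OF p])
  qed
  also have "\<dots> = (\<Prod>k=1..d. \<Sum>t\<in>{c k..e k}. ta k powi (2*t)) * (\<Prod>k=1..d. \<Sum>t\<in>{c k..e k}. tb k powi (2*t))"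
    by (simp add: prod.distrib)
  finally show ?thesis unfolding eA eB eD f_def .
qed

lemma final_abs:
  fixes W :: "'a set" and wa wb :: "'a \<Rightarrow> real" and P :: real
  assumes fin: "finite W" and nn: "\<forall>x\<in>W. 0 \<le> wa x \<and> 0 \<le> wb x" and P: "1 < P"
    and key: "P * (\<Sum>x\<in>W. wa x * wb x) \<le> (\<Sum>x\<in>W. wa x) * (\<Sum>x\<in>W. wb x)"
  shows "(\<Sum>(x,y)\<in>{(x,y). x \<in> W \<and> y \<in> W \<and> x \<noteq> y}. wa x * wb y) \<le> (\<Sum>x\<in>W. wa x) * (\<Sum>x\<in>W. wb x)
       \<and> (\<Sum>x\<in>W. wa x) * (\<Sum>x\<in>W. wb x) \<le> inverse (1 - inverse P) * (\<Sum>(x,y)\<in>{(x,y). x \<in> W \<and> y \<in> W \<and> x \<noteq> y}. wa x * wb y)"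
proof -
  define Off where "Off = {(x,y). x \<in> W \<and> y \<in> W \<and> x \<noteq> y}"
  define Dg where "Dg = (\<lambda>x. (x,x)) ` W"
  define X where "X = (\<Sum>x\<in>W. wa x) * (\<Sum>x\<in>W. wb x)"
  define D where "D = (\<Sum>x\<in>W. wa x * wb x)"
  have "X = (\<Sum>(x,y)\<in>W \<times> W. wa x * wb y)"
    unfolding X_def by (simp add: sum_product sum.cartesian_product)
  also have "W \<times> W = Off \<union> Dg" by (auto simp: Off_def Dg_def)
  also have "(\<Sum>(x,y)\<in>Off \<union> Dg. wa x * wb y) = (\<Sum>(x,y)\<in>Off. wa x * wb y) + (\<Sum>(x,y)\<in>Dg. wa x * wb y)"
  proof (rule sum.union_disjoint)
    have "Off \<subseteq> W \<times> W" by (auto simp: Off_def)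
    then show "finite Off" using fin by (meson finite_SigmaI finite_subset)
    show "finite Dg" using fin by (simp add: Dg_def)
    show "Off \<inter> Dg = {}" by (auto simp: Off_def Dg_def)
  qed
  also have "(\<Sum>(x,y)\<in>Dg. wa x * wb y) = D"
    unfolding Dg_def D_def by (subst sum.reindex) (auto simp: inj_on_def)
  finally have XO: "X = (\<Sum>(x,y)\<in>Off. wa x * wb y) + D" .
  have D0: "0 \<le> D" using nn by (auto simp: D_def intro!: sum_nonneg)
  have q: "0 < 1 - inverse P" using P by (simp add: inverse_less_1_iff)
  have "(1 - inverse P) * X \<le> X - D"
  proof -
    have "P * D \<le> X" using key by (simp add: D_def X_def)
    then have "inverse P * (P * D) \<le> inverse P * X" using P by (intro mult_left_mono) auto
    moreover have "inverse P * (P * D) = D" using P by simp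
    ultimately have "D \<le> inverse P * X" by linarith
    then show ?thesis by (simp add: algebra_simps)
  qed
  then have h: "(1 - inverse P) * X \<le> X - D" .
  have "X = inverse (1 - inverse P) * ((1 - inverse P) * X)"
  proof -
    have qn: "1 - inverse P \<noteq> 0" using q by linarith
    show ?thesis by (simp only: mult.assoc[symmetric] left_inverse[OF qn] mult_1_left)
  qed
  also have "\<dots> \<le> inverse (1 - inverse P) * (X - D)"
    using q h by (intro mult_left_mono) auto
  finally have "X \<le> inverse (1 - inverse P) * (X - D)" .
  then show ?thesis using XO D0 unfolding Off_def[symmetric] X_def[symmetric] by simp
qed

lemma weight_gen:
  fixes lam :: "nat \<Rightarrow> real" and mu :: real and y :: "nat \<Rightarrow> int" and K :: "nat set"
  assumes "finite K" "mu \<noteq> 0" "\<forall>k\<in>K. lam k \<noteq> 0"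
  shows "(\<Prod>k\<in>K. lam k powi (2 * y k)) * mu powi (-2 * (\<Sum>k\<in>K. int (v k) * y k))
       = (\<Prod>k\<in>K. (lam k * mu powi (- int (v k))) powi (2 * y k))"
proof -
  have "(\<Prod>k\<in>K. (lam k * mu powi (- int (v k))) powi (2 * y k))
      = (\<Prod>k\<in>K. lam k powi (2 * y k) * mu powi (-2 * (int (v k) * y k)))"
    by (rule prod.cong[OF refl]) (simp add: power_int_mult_distrib power_int_mult[symmetric] algebra_simps)
  also have "\<dots> = (\<Prod>k\<in>K. lam k powi (2 * y k)) * (\<Prod>k\<in>K. mu powi (-2 * (int (v k) * y k)))"
    by (simp add: prod.distrib)
  also have "(\<Prod>k\<in>K. mu powi (-2 * (int (v k) * y k))) = mu powi (\<Sum>k\<in>K. -2 * (int (v k) * y k))"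
    using powi_sum[OF assms(1) assms(2)] by simp
  also have "(\<Sum>k\<in>K. -2 * (int (v k) * y k)) = -2 * (\<Sum>k\<in>K. int (v k) * y k)"
    by (simp add: sum_distrib_left)
  finally show ?thesis by simp
qed

lemma region_diff:
  fixes z :: "nat \<Rightarrow> int"
  assumes j: "j \<in> {1..d}" and mn: "m < n"
  shows "((\<forall>k\<in>{1..d}. 0 \<le> z k \<and> z k \<le> int (if k < j then L else if k = j then n else l) - 1)
         \<and> \<not> (\<forall>k\<in>{1..d}. 0 \<le> z k \<and> z k \<le> int (if k < j then L else if k = j then m else l) - 1))
     \<longleftrightarrow> (\<forall>k\<in>{1..d}. z k \<in> {(if k = j then int m else 0)..(if k = j then int n - 1 else int (if k < j then L else l) - 1)})"
  (is "?A \<and> \<not> ?B \<longleftrightarrow> ?C")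
proof
  assume h: "?A \<and> \<not> ?B"
  have A: "\<And>k. k\<in>{1..d} \<Longrightarrow> 0 \<le> z k \<and> z k \<le> int (if k < j then L else if k = j then n else l) - 1"
    using h by blast
  from h obtain k0 where k0: "k0 \<in> {1..d}" "\<not> (0 \<le> z k0 \<and> z k0 \<le> int (if k0 < j then L else if k0 = j then m else l) - 1)"
    by blast
  have "k0 = j"
  proof (rule ccontr)
    assume "k0 \<noteq> j"
    then have "(if k0 < j then L else if k0 = j then m else l) = (if k0 < j then L else if k0 = j then n else l)" by simp
    then show False using A[OF k0(1)] k0(2) by simp
  qed
  then have zj: "int m \<le> z j" using A[OF j] k0(2) by auto
  show ?C
  proof
    fix k assume k: "k \<in> {1..d}"
    show "z k \<in> {(if k = j then int m else 0)..(if k = j then int n - 1 else int (if k < j then L else l) - 1)}"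
      using A[OF k] zj by (cases "k = j") auto
  qed
next
  assume h: ?C
  have "?A"
  proof
    fix k assume k: "k \<in> {1..d}"
    show "0 \<le> z k \<and> z k \<le> int (if k < j then L else if k = j then n else l) - 1"
    proof -
      have hk: "z k \<in> {(if k = j then int m else 0)..(if k = j then int n - 1 else int (if k < j then L else l) - 1)}"
        using h k by blast
      show ?thesis using hk mn by (cases "k = j") auto
    qed
  qed
  moreover have "\<not> ?B"
  proof
    assume "?B"
    then have "0 \<le> z j \<and> z j \<le> int (if j < j then L else if j = j then m else l) - 1" using j by blast
    then have "z j \<le> int m - 1" by simp
    moreover have "z j \<in> {int m..int n - 1}" using h j by fastforce
    then have "int m \<le> z j" by simp
    ultimately show False by simp
  qed
  ultimately show "?A \<and> \<not> ?B" by blast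
qed


definition cc :: "nat \<Rightarrow> nat \<Rightarrow> nat \<Rightarrow> int" where
  "cc j m k = (if k = j then int m else 0)"
definition ee :: "nat \<Rightarrow> nat \<Rightarrow> nat \<Rightarrow> nat \<Rightarrow> nat \<Rightarrow> int" where
  "ee j L l n k = (if k = j then int n - 1 else int (if k < j then L else l) - 1)"

definition T1 :: "nat \<Rightarrow> (nat \<Rightarrow> nat) \<Rightarrow> (nat \<Rightarrow> int) \<Rightarrow> (nat \<Rightarrow> int)" where
  "T1 d v x = x(1 := x 1 + (\<Sum>k=2..d. int (v k) * x k))"
definition U1 :: "nat \<Rightarrow> (nat \<Rightarrow> nat) \<Rightarrow> (nat \<Rightarrow> int) \<Rightarrow> (nat \<Rightarrow> int)" where
  "U1 d v y = y(1 := y 1 - (\<Sum>k=2..d. int (v k) * y k))"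

lemma S_upd1: fixes v :: "nat \<Rightarrow> nat" and x :: "nat \<Rightarrow> int" shows "(\<Sum>k=2..d. int (v k) * (x(1:=t)) k) = (\<Sum>k=2..d. int (v k) * x k)"
  by (rule sum.cong) auto

lemma TU1: fixes v :: "nat \<Rightarrow> nat" shows "T1 d v (U1 d v y) = y" "U1 d v (T1 d v x) = x"
  by (auto simp: T1_def U1_def S_upd1 fun_eq_iff)

lemma vol1_iff:
  assumes "1 \<le> d"
  shows "x \<in> volume Case1 d v Lv \<longleftrightarrow> x \<in> zd d \<and> (\<forall>k\<in>{1..d}. 0 \<le> T1 d v x k \<and> T1 d v x k \<le> int (Lv k) - 1)"
proof -
  have e: "{1..d} = insert 1 {2..d}" using assms by auto
  have t1: "T1 d v x 1 = x 1 + (\<Sum>k=2..d. int (v k) * x k)" by (simp add: T1_def)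
  have tk: "(\<forall>k\<in>{2..d}. 0 \<le> T1 d v x k \<and> T1 d v x k \<le> int (Lv k) - 1) \<longleftrightarrow> (\<forall>k\<in>{2..d}. 0 \<le> x k \<and> x k \<le> int (Lv k) - 1)"
    by (auto simp: T1_def)
  show ?thesis unfolding e using t1 tk by simp
qed

lemma lam1_char:
  assumes j: "j \<in> {1..d}" and mn: "m < n"
  shows "volj Case1 d v j L l n - volj Case1 d v j L l m
       = {x \<in> zd d. \<forall>k\<in>{1..d}. T1 d v x k \<in> {cc j m k..ee j L l n k}}"
proof -
  have d: "1 \<le> d" using j by auto
  show ?thesis
  proof (rule set_eqI)
    fix x
    have r: "((\<forall>k\<in>{1..d}. 0 \<le> T1 d v x k \<and> T1 d v x k \<le> int (if k < j then L else if k = j then n else l) - 1)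
         \<and> \<not> (\<forall>k\<in>{1..d}. 0 \<le> T1 d v x k \<and> T1 d v x k \<le> int (if k < j then L else if k = j then m else l) - 1))
     \<longleftrightarrow> (\<forall>k\<in>{1..d}. T1 d v x k \<in> {(if k = j then int m else 0)..(if k = j then int n - 1 else int (if k < j then L else l) - 1)})"
      by (rule region_diff[OF j mn])
    show "x \<in> volj Case1 d v j L l n - volj Case1 d v j L l m \<longleftrightarrow> x \<in> {x \<in> zd d. \<forall>k\<in>{1..d}. T1 d v x k \<in> {cc j m k..ee j L l n k}}"
      unfolding volj_def cc_def ee_def Diff_iff vol1_iff[OF d] mem_Collect_eq using r by blast
  qed
qed

lemma zd_T1: "1 \<le> d \<Longrightarrow> x \<in> zd d \<Longrightarrow> T1 d v x \<in> zd d"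
  by (auto simp: zd_def T1_def)
lemma zd_U1: "1 \<le> d \<Longrightarrow> x \<in> zd d \<Longrightarrow> U1 d v x \<in> zd d"
  by (auto simp: zd_def U1_def)

lemma case1_reindex:
  assumes j: "j \<in> {1..d}" and mn: "m < n"
  shows "(\<Sum>x\<in>volj Case1 d v j L l n - volj Case1 d v j L l m. g x)
       = (\<Sum>y\<in>box d (\<lambda>k. {cc j m k..ee j L l n k}). g (U1 d v y))"
proof -
  have d: "1 \<le> d" using j by auto
  show ?thesis unfolding lam1_char[OF j mn]
  proof (rule sum.reindex_bij_witness[where i="U1 d v" and j="T1 d v"])
    fix a assume a: "a \<in> {x \<in> zd d. \<forall>k\<in>{1..d}. T1 d v x k \<in> {cc j m k..ee j L l n k}}"
    show "U1 d v (T1 d v a) = a" by (rule TU1)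
    show "T1 d v a \<in> box d (\<lambda>k. {cc j m k..ee j L l n k})"
      using a zd_T1[OF d] by (auto simp: box_def)
    show "g (U1 d v (T1 d v a)) = g a" by (simp add: TU1)
  next
    fix b assume b: "b \<in> box d (\<lambda>k. {cc j m k..ee j L l n k})"
    show "T1 d v (U1 d v b) = b" by (rule TU1)
    show "U1 d v b \<in> {x \<in> zd d. \<forall>k\<in>{1..d}. T1 d v x k \<in> {cc j m k..ee j L l n k}}"
      using b zd_U1[OF d] by (auto simp: box_def TU1)
  qed
qed

lemma case1_finite:
  assumes j: "j \<in> {1..d}" and mn: "m < n"
  shows "finite (volj Case1 d v j L l n - volj Case1 d v j L l m)"
proof -
  have d: "1 \<le> d" using j by auto
  have "volj Case1 d v j L l n - volj Case1 d v j L l m \<subseteq> U1 d v ` box d (\<lambda>k. {cc j m k..ee j L l n k})"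
    unfolding lam1_char[OF j mn]
  proof
    fix x assume x: "x \<in> {x \<in> zd d. \<forall>k\<in>{1..d}. T1 d v x k \<in> {cc j m k..ee j L l n k}}"
    then have "T1 d v x \<in> box d (\<lambda>k. {cc j m k..ee j L l n k})" using zd_T1[OF d] by (auto simp: box_def)
    then show "x \<in> U1 d v ` box d (\<lambda>k. {cc j m k..ee j L l n k})" by (metis TU1(2) image_eqI)
  qed
  moreover have "finite (box d (\<lambda>k. {cc j m k..ee j L l n k}))" by (rule box_finite) simp
  ultimately show ?thesis by (meson finite_imageI finite_subset)
qed

lemma w1:
  fixes lam :: "nat \<Rightarrow> real"
  assumes d: "1 \<le> d" and nz: "\<forall>k\<in>{1..d}. lam k \<noteq> 0"
  shows "(\<Prod>k=1..d. lam k powi (2 * x k))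
       = (\<Prod>k=1..d. (if k = 1 then lam 1 else lam k * lam 1 powi (- int (v k))) powi (2 * T1 d v x k))"
proof -
  define S where "S = (\<Sum>k=2..d. int (v k) * x k)"
  have l1: "lam 1 \<noteq> 0" using nz d by auto
  have "(\<Prod>k=1..d. (if k = 1 then lam 1 else lam k * lam 1 powi (- int (v k))) powi (2 * T1 d v x k))
      = lam 1 powi (2 * (x 1 + S)) * (\<Prod>k=2..d. (lam k * lam 1 powi (- int (v k))) powi (2 * x k))"
  proof -
    have e: "(\<Prod>k=1..d. f k) = f 1 * (\<Prod>k=2..d. f k)" for f :: "nat \<Rightarrow> real"
      using d by (simp add: prod.atLeast_Suc_atMost numeral_2_eq_2)
    have p: "(\<Prod>k=2..d. (if k = 1 then lam 1 else lam k * lam 1 powi (- int (v k))) powi (2 * T1 d v x k))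
        = (\<Prod>k=2..d. (lam k * lam 1 powi (- int (v k))) powi (2 * x k))"
      by (rule prod.cong) (auto simp: T1_def)
    have t: "T1 d v x 1 = x 1 + S" by (simp add: T1_def S_def)
    show ?thesis by (subst e) (simp only: p t, simp)
  qed
  also have "(\<Prod>k=2..d. (lam k * lam 1 powi (- int (v k))) powi (2 * x k))
      = (\<Prod>k=2..d. lam k powi (2 * x k)) * lam 1 powi (-2 * S)"
    unfolding S_def using weight_gen[where K="{2..d}" and mu="lam 1" and lam=lam and v=v and y=x] nz l1 by simp
  also have "lam 1 powi (2 * (x 1 + S)) * ((\<Prod>k=2..d. lam k powi (2 * x k)) * lam 1 powi (-2 * S))
      = lam 1 powi (2 * x 1) * (\<Prod>k=2..d. lam k powi (2 * x k))"
  proof -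
    have "lam 1 powi (2 * (x 1 + S)) * lam 1 powi (-2 * S) = lam 1 powi (2 * (x 1 + S) + -2 * S)"
      by (rule power_int_add[symmetric]) (use l1 in simp)
    also have "2 * (x 1 + S) + -2 * S = 2 * x 1" by simp
    finally show ?thesis by (simp add: mult_ac)
  qed
  also have "lam 1 powi (2 * x 1) * (\<Prod>k=2..d. lam k powi (2 * x k)) = (\<Prod>k=1..d. lam k powi (2 * x k))"
    using d by (simp add: prod.atLeast_Suc_atMost numeral_2_eq_2)
  finally show ?thesis by (rule sym)
qed

definition S3 :: "nat \<Rightarrow> (nat \<Rightarrow> nat) \<Rightarrow> (nat \<Rightarrow> int) \<Rightarrow> int" where
  "S3 d v x = (\<Sum>k=3..d. int (v k) * x k)"
definition F2 :: "nat \<Rightarrow> (nat \<Rightarrow> nat) \<Rightarrow> (nat \<Rightarrow> int) \<Rightarrow> (nat \<Rightarrow> int)" where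
  "F2 d v x = x(1 := (x 1 + x 2) div 2 + S3 d v x, 2 := (x 2 - x 1) div 2)"
definition G2 :: "nat \<Rightarrow> (nat \<Rightarrow> nat) \<Rightarrow> int \<Rightarrow> (nat \<Rightarrow> int) \<Rightarrow> (nat \<Rightarrow> int)" where
  "G2 d v p y = y(1 := y 1 - y 2 - S3 d v y, 2 := y 1 + y 2 + p - S3 d v y)"

lemma S3_upd: "S3 d v (x(1 := a, 2 := b)) = S3 d v x"
  unfolding S3_def by (rule sum.cong) auto

lemma FG2: "p \<in> {0,1} \<Longrightarrow> F2 d v (G2 d v p y) = y"
proof -
  assume p: "p \<in> {0,1}"
  have a: "(y 1 - y 2 - S3 d v y + (y 1 + y 2 + p - S3 d v y)) div 2 + S3 d v y = y 1"
    using p by auto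
  have b: "(y 1 + y 2 + p - S3 d v y - (y 1 - y 2 - S3 d v y)) div 2 = y 2"
    using p by auto
  show ?thesis unfolding F2_def G2_def S3_upd using a b by (auto simp: fun_eq_iff)
qed

lemma GF2: "(x 1 + x 2) mod 2 = p \<Longrightarrow> G2 d v p (F2 d v x) = x"
proof -
  assume p: "(x 1 + x 2) mod 2 = p"
  have a: "(x 1 + x 2) div 2 + S3 d v x - (x 2 - x 1) div 2 - S3 d v x = x 1"
    using p by presburger
  have b: "(x 1 + x 2) div 2 + S3 d v x + (x 2 - x 1) div 2 + p - S3 d v x = x 2"
    using p by presburger
  show ?thesis unfolding F2_def G2_def S3_upd using a b by (auto simp: fun_eq_iff)
qed

lemma par2: "p \<in> {0,1} \<Longrightarrow> (G2 d v p y 1 + G2 d v p y 2) mod 2 = p"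
  unfolding G2_def by auto presburger+

lemma half_nn: "(0::real) \<le> real_of_int t / 2 \<longleftrightarrow> 0 \<le> t" by simp

lemma h1: "(0::real) \<le> (real_of_int a + real_of_int b) / 2 + real_of_int s \<longleftrightarrow> 0 \<le> (a + b) div 2 + s"
proof -
  have eq: "(real_of_int a + real_of_int b) / 2 + real_of_int s = real_of_int (a + b + 2 * s) / 2" by simp
  have "(0::real) \<le> (real_of_int a + real_of_int b) / 2 + real_of_int s \<longleftrightarrow> 0 \<le> a + b + 2*s"
    unfolding eq half_nn ..
  also have "\<dots> \<longleftrightarrow> 0 \<le> (a + b) div 2 + s" by presburger
  finally show ?thesis .
qed

lemma h2: "(real_of_int a + real_of_int b) / 2 + real_of_int s \<le> real M - 1/2 \<longleftrightarrow> (a + b) div 2 + s \<le> int M - 1"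
proof -
  have "(real_of_int a + real_of_int b) / 2 + real_of_int s \<le> real M - 1/2
        \<longleftrightarrow> real_of_int (a + b + 2 * s) \<le> real_of_int (2 * int M - 1)" by (auto simp: field_simps)
  also have "\<dots> \<longleftrightarrow> a + b + 2 * s \<le> 2 * int M - 1" by (rule of_int_le_iff)
  also have "\<dots> \<longleftrightarrow> (a + b) div 2 + s \<le> int M - 1" by presburger
  finally show ?thesis .
qed

lemma h3: "(0::real) \<le> (real_of_int b - real_of_int a) / 2 \<longleftrightarrow> 0 \<le> (b - a) div 2"
proof -
  have "(0::real) \<le> (real_of_int b - real_of_int a) / 2 \<longleftrightarrow> 0 \<le> b - a" by simp
  also have "\<dots> \<longleftrightarrow> 0 \<le> (b - a) div 2" by presburger
  finally show ?thesis .
qed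

lemma h4: "(real_of_int b - real_of_int a) / 2 \<le> real M - 1/2 \<longleftrightarrow> (b - a) div 2 \<le> int M - 1"
proof -
  have "(real_of_int b - real_of_int a) / 2 \<le> real M - 1/2
        \<longleftrightarrow> real_of_int (b - a) \<le> real_of_int (2 * int M - 1)" by (auto simp: field_simps)
  also have "\<dots> \<longleftrightarrow> b - a \<le> 2 * int M - 1" by (rule of_int_le_iff)
  also have "\<dots> \<longleftrightarrow> (b - a) div 2 \<le> int M - 1" by presburger
  finally show ?thesis .
qed

lemma S3_real: "(\<Sum>k=3..d. real (v k) * real_of_int (x k)) = real_of_int (S3 d v x)"
  by (simp add: S3_def)

lemma vol2_iff:
  assumes "2 \<le> d"
  shows "x \<in> volume Case2 d v Lv \<longleftrightarrow> x \<in> zd d \<and> (\<forall>k\<in>{1..d}. 0 \<le> F2 d v x k \<and> F2 d v x k \<le> int (Lv k) - 1)"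
proof -
  have e: "{1..d} = insert 1 (insert 2 {3..d})" using assms by auto
  have t1: "F2 d v x 1 = (x 1 + x 2) div 2 + S3 d v x" by (simp add: F2_def)
  have t2: "F2 d v x 2 = (x 2 - x 1) div 2" by (simp add: F2_def)
  have tk: "(\<forall>k\<in>{3..d}. 0 \<le> F2 d v x k \<and> F2 d v x k \<le> int (Lv k) - 1) \<longleftrightarrow> (\<forall>k\<in>{3..d}. 0 \<le> x k \<and> x k \<le> int (Lv k) - 1)"
    by (auto simp: F2_def)
  show ?thesis
    unfolding e volume.simps mem_Collect_eq S3_real h1 h2 h3 h4 ball_simps(7) t1 t2 tk by blast
qed


lemma lam2_char:
  assumes j: "j \<in> {1..d}" and mn: "m < n" and d: "2 \<le> d"
  shows "volj Case2 d v j L l n - volj Case2 d v j L l m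
       = {x \<in> zd d. \<forall>k\<in>{1..d}. F2 d v x k \<in> {cc j m k..ee j L l n k}}"
proof (rule set_eqI)
  fix x
  have r: "((\<forall>k\<in>{1..d}. 0 \<le> F2 d v x k \<and> F2 d v x k \<le> int (if k < j then L else if k = j then n else l) - 1)
       \<and> \<not> (\<forall>k\<in>{1..d}. 0 \<le> F2 d v x k \<and> F2 d v x k \<le> int (if k < j then L else if k = j then m else l) - 1))
   \<longleftrightarrow> (\<forall>k\<in>{1..d}. F2 d v x k \<in> {(if k = j then int m else 0)..(if k = j then int n - 1 else int (if k < j then L else l) - 1)})"
    by (rule region_diff[OF j mn])
  show "x \<in> volj Case2 d v j L l n - volj Case2 d v j L l m \<longleftrightarrow> x \<in> {x \<in> zd d. \<forall>k\<in>{1..d}. F2 d v x k \<in> {cc j m k..ee j L l n k}}"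
    unfolding volj_def cc_def ee_def Diff_iff vol2_iff[OF d] mem_Collect_eq using r by blast
qed

lemma zd_F2: "2 \<le> d \<Longrightarrow> x \<in> zd d \<Longrightarrow> F2 d v x \<in> zd d"
  by (auto simp: zd_def F2_def)
lemma zd_G2: "2 \<le> d \<Longrightarrow> x \<in> zd d \<Longrightarrow> G2 d v p x \<in> zd d"
  by (auto simp: zd_def G2_def)

lemma case2_reindex:
  assumes j: "j \<in> {1..d}" and mn: "m < n" and d: "2 \<le> d" and p: "p \<in> {0,1}"
  shows "(\<Sum>x\<in>{x \<in> volj Case2 d v j L l n - volj Case2 d v j L l m. (x 1 + x 2) mod 2 = p}. g x)
       = (\<Sum>y\<in>box d (\<lambda>k. {cc j m k..ee j L l n k}). g (G2 d v p y))"
  unfolding lam2_char[OF j mn d]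
proof (rule sum.reindex_bij_witness[where i="G2 d v p" and j="F2 d v"])
  fix a assume a: "a \<in> {x \<in> {x \<in> zd d. \<forall>k\<in>{1..d}. F2 d v x k \<in> {cc j m k..ee j L l n k}}. (x 1 + x 2) mod 2 = p}"
  show "G2 d v p (F2 d v a) = a" using a by (intro GF2) auto
  then show "g (G2 d v p (F2 d v a)) = g a" by simp
  show "F2 d v a \<in> box d (\<lambda>k. {cc j m k..ee j L l n k})"
    using a zd_F2[OF d] by (auto simp: box_def)
next
  fix b assume b: "b \<in> box d (\<lambda>k. {cc j m k..ee j L l n k})"
  show "F2 d v (G2 d v p b) = b" by (rule FG2[OF p])
  show "G2 d v p b \<in> {x \<in> {x \<in> zd d. \<forall>k\<in>{1..d}. F2 d v x k \<in> {cc j m k..ee j L l n k}}. (x 1 + x 2) mod 2 = p}"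
    using b zd_G2[OF d] FG2[OF p] par2[OF p] by (auto simp: box_def)
qed

lemma mod2_cases: "(z::int) mod 2 = 0 \<or> z mod 2 = 1" by presburger

lemma case2_finite:
  assumes j: "j \<in> {1..d}" and mn: "m < n" and d: "2 \<le> d"
  shows "finite (volj Case2 d v j L l n - volj Case2 d v j L l m)"
proof -
  let ?B = "box d (\<lambda>k. {cc j m k..ee j L l n k})"
  have "volj Case2 d v j L l n - volj Case2 d v j L l m \<subseteq> G2 d v 0 ` ?B \<union> G2 d v 1 ` ?B"
    unfolding lam2_char[OF j mn d]
  proof
    fix x assume x: "x \<in> {x \<in> zd d. \<forall>k\<in>{1..d}. F2 d v x k \<in> {cc j m k..ee j L l n k}}"
    then have B: "F2 d v x \<in> ?B" using zd_F2[OF d] by (auto simp: box_def)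
    have "(x 1 + x 2) mod 2 = 0 \<or> (x 1 + x 2) mod 2 = 1" by (rule mod2_cases)
    then show "x \<in> G2 d v 0 ` ?B \<union> G2 d v 1 ` ?B"
    proof
      assume h: "(x 1 + x 2) mod 2 = 0"
      have "x = G2 d v 0 (F2 d v x)" using GF2[OF h] by simp
      then have "x \<in> G2 d v 0 ` ?B" using B by (rule image_eqI)
      then show ?thesis by (rule UnI1)
    next
      assume h: "(x 1 + x 2) mod 2 = 1"
      have "x = G2 d v 1 (F2 d v x)" using GF2[OF h] by simp
      then have "x \<in> G2 d v 1 ` ?B" using B by (rule image_eqI)
      then show ?thesis by (rule UnI2)
    qed
  qed
  moreover have "finite ?B" by (rule box_finite) simp
  ultimately show ?thesis by (meson finite_UnI finite_imageI finite_subset)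
qed

lemma case2_split:
  assumes j: "j \<in> {1..d}" and mn: "m < n" and d: "2 \<le> d"
  shows "(\<Sum>x\<in>volj Case2 d v j L l n - volj Case2 d v j L l m. g x)
       = (\<Sum>y\<in>box d (\<lambda>k. {cc j m k..ee j L l n k}). g (G2 d v 0 y))
         + (\<Sum>y\<in>box d (\<lambda>k. {cc j m k..ee j L l n k}). g (G2 d v 1 y))"
proof -
  let ?W = "volj Case2 d v j L l n - volj Case2 d v j L l m"
  have fin: "finite ?W" by (rule case2_finite[OF j mn d])
  define A where "A = {x \<in> ?W. (x 1 + x 2) mod 2 = 0}"
  define B where "B = {x \<in> ?W. (x 1 + x 2) mod 2 = 1}"
  have e: "?W = A \<union> B"
  proof (rule set_eqI)
    fix x :: "nat \<Rightarrow> int"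
    have "(x 1 + x 2) mod 2 = 0 \<or> (x 1 + x 2) mod 2 = 1" by (rule mod2_cases)
    then show "x \<in> ?W \<longleftrightarrow> x \<in> A \<union> B" unfolding A_def B_def by auto
  qed
  have fA: "finite A" "finite B" unfolding A_def B_def by (rule finite_subset[OF _ fin], blast)+
  have dj: "A \<inter> B = {}" unfolding A_def B_def by auto
  have "(\<Sum>x\<in>?W. g x) = (\<Sum>x\<in>A \<union> B. g x)" by (rule arg_cong[where f="sum g", OF e])
  also have "\<dots> = (\<Sum>x\<in>A. g x) + (\<Sum>x\<in>B. g x)" by (rule sum.union_disjoint[OF fA dj])
  finally have "(\<Sum>x\<in>?W. g x) = (\<Sum>x\<in>A. g x) + (\<Sum>x\<in>B. g x)" .
  then show ?thesis using case2_reindex[OF j mn d, of 0 g] case2_reindex[OF j mn d, of 1 g] unfolding A_def B_def by simp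
qed


lemma split3:
  fixes f :: "nat \<Rightarrow> real"
  assumes "2 \<le> d"
  shows "(\<Prod>k=1..d. f k) = f 1 * f 2 * (\<Prod>k=3..d. f k)"
proof -
  have e: "{1..d} = insert 1 (insert 2 {3..d})" using assms by auto
  show ?thesis unfolding e by (simp add: mult.assoc)
qed

lemma pw4: "(x::real) \<noteq> 0 \<Longrightarrow> x powi (a + b + c + e) = x powi a * x powi b * x powi c * x powi e"
  by (simp add: power_int_add)

lemma G2_k: "3 \<le> k \<Longrightarrow> G2 d v p y k = y k"
  by (simp add: G2_def)

lemma w2a:
  fixes la lb :: "nat \<Rightarrow> real"
  assumes d: "2 \<le> d" and la2: "la 2 = 1" and nz: "\<forall>k\<in>{1..d}. la k \<noteq> 0"
  shows "(\<Prod>k=1..d. la k powi (2 * G2 d v p y k)) = (\<Prod>k=1..d. tla Case2 la lb v k powi (2 * y k))"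
proof -
  define S where "S = S3 d v y"
  define Q where "Q = (\<Prod>k=3..d. la k powi (2 * y k))"
  have l1: "la 1 \<noteq> 0" using nz d by auto
  have nz3: "\<forall>k\<in>{3..d}. la k \<noteq> 0" using nz by auto
  have "(\<Prod>k=1..d. la k powi (2 * G2 d v p y k))
      = la 1 powi (2 * (y 1 - y 2 - S)) * Q"
    unfolding split3[OF d] using la2 by (simp add: G2_k G2_def S_def Q_def)
  also have "la 1 powi (2 * (y 1 - y 2 - S)) = la 1 powi (2 * y 1) * la 1 powi (-2 * y 2) * la 1 powi (-2 * S) * la 1 powi 0"
  proof -
    have e: "2 * (y 1 - y 2 - S) = 2 * y 1 + -2 * y 2 + -2 * S + 0" by simp
    show ?thesis unfolding e by (rule pw4[OF l1])
  qed
  finally have L: "(\<Prod>k=1..d. la k powi (2 * G2 d v p y k)) = la 1 powi (2 * y 1) * la 1 powi (-2 * y 2) * la 1 powi (-2 * S) * Q"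
    by simp
  have p3: "(\<Prod>k=3..d. tla Case2 la lb v k powi (2*y k)) = (\<Prod>k=3..d. (la k * la 1 powi (-int (v k))) powi (2*y k))"
    by (rule prod.cong) auto
  have "(\<Prod>k=1..d. tla Case2 la lb v k powi (2 * y k))
      = la 1 powi (2 * y 1) * (inverse (la 1)) powi (2 * y 2) * (\<Prod>k=3..d. (la k * la 1 powi (- int (v k))) powi (2 * y k))"
    unfolding split3[OF d] p3 by simp
  also have "(\<Prod>k=3..d. (la k * la 1 powi (- int (v k))) powi (2 * y k)) = Q * la 1 powi (-2 * S)"
    unfolding S_def S3_def Q_def using weight_gen[where K="{3..d}" and mu="la 1" and lam=la and v=v and y=y] nz3 l1 by simp
  also have "(inverse (la 1)) powi (2 * y 2) = la 1 powi (-2 * y 2)"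
    by (simp add: power_int_minus power_int_inverse)
  finally have R: "(\<Prod>k=1..d. tla Case2 la lb v k powi (2 * y k)) = la 1 powi (2 * y 1) * la 1 powi (-2 * y 2) * (Q * la 1 powi (-2 * S))" .
  show ?thesis unfolding L R by (simp add: mult_ac)
qed

lemma w2b:
  fixes la lb :: "nat \<Rightarrow> real"
  assumes d: "2 \<le> d" and lb1: "lb 1 = 1" and nz: "\<forall>k\<in>{1..d}. lb k \<noteq> 0"
  shows "(\<Prod>k=1..d. lb k powi (2 * G2 d v p y k)) = lb 2 powi (2 * p) * (\<Prod>k=1..d. tlb Case2 la lb v k powi (2 * y k))"
proof -
  define S where "S = S3 d v y"
  define Q where "Q = (\<Prod>k=3..d. lb k powi (2 * y k))"
  have l2: "lb 2 \<noteq> 0" using nz d by auto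
  have nz3: "\<forall>k\<in>{3..d}. lb k \<noteq> 0" using nz by auto
  have "(\<Prod>k=1..d. lb k powi (2 * G2 d v p y k))
      = lb 2 powi (2 * (y 1 + y 2 + p - S)) * Q"
    unfolding split3[OF d] using lb1 by (simp add: G2_k G2_def S_def Q_def)
  also have "lb 2 powi (2 * (y 1 + y 2 + p - S)) = lb 2 powi (2 * p) * lb 2 powi (2 * y 1) * lb 2 powi (2 * y 2) * lb 2 powi (-2 * S)"
  proof -
    have e: "2 * (y 1 + y 2 + p - S) = 2 * p + 2 * y 1 + 2 * y 2 + -2 * S" by simp
    show ?thesis unfolding e by (rule pw4[OF l2])
  qed
  finally have L: "(\<Prod>k=1..d. lb k powi (2 * G2 d v p y k)) = lb 2 powi (2 * p) * lb 2 powi (2 * y 1) * lb 2 powi (2 * y 2) * lb 2 powi (-2 * S) * Q" .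
  have p3: "(\<Prod>k=3..d. tlb Case2 la lb v k powi (2*y k)) = (\<Prod>k=3..d. (lb k * lb 2 powi (-int (v k))) powi (2*y k))"
    by (rule prod.cong) auto
  have "(\<Prod>k=1..d. tlb Case2 la lb v k powi (2 * y k))
      = lb 2 powi (2 * y 1) * lb 2 powi (2 * y 2) * (\<Prod>k=3..d. (lb k * lb 2 powi (- int (v k))) powi (2 * y k))"
    unfolding split3[OF d] p3 by simp
  also have "(\<Prod>k=3..d. (lb k * lb 2 powi (- int (v k))) powi (2 * y k)) = Q * lb 2 powi (-2 * S)"
    unfolding S_def S3_def Q_def using weight_gen[where K="{3..d}" and mu="lb 2" and lam=lb and v=v and y=y] nz3 l2 by simp
  finally have R: "(\<Prod>k=1..d. tlb Case2 la lb v k powi (2 * y k)) = lb 2 powi (2 * y 1) * lb 2 powi (2 * y 2) * (Q * lb 2 powi (-2 * S))" .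
  show ?thesis unfolding L R by (simp add: mult_ac)
qed

lemma Pgt1:
  fixes f :: "nat \<Rightarrow> real"
  assumes "1 \<le> d" "\<And>k. 1 < f k"
  shows "1 < (\<Prod>k=1..d. f k)"
proof -
  have e: "(\<Prod>k=1..d. f k) = f 1 * (\<Prod>k=2..d. f k)"
    using assms(1) by (simp add: prod.atLeast_Suc_atMost numeral_2_eq_2)
  have g: "1 \<le> (\<Prod>k=2..d. f k)" by (rule prod_ge_1) (use assms(2) in \<open>auto intro: less_imp_le\<close>)
  have h: "f 1 * 1 \<le> f 1 * (\<Prod>k=2..d. f k)"
    by (rule mult_left_mono[OF g]) (use assms(2)[of 1] in simp)
  then have "f 1 \<le> f 1 * (\<Prod>k=2..d. f k)" by simp
  then show ?thesis using e assms(2)[of 1] by linarith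
qed

lemma lpow_nn: "\<forall>k\<in>{1..d}. 0 < lam k \<Longrightarrow> 0 \<le> lpow d lam x"
  unfolding lpow_def by (auto intro!: prod_nonneg)

lemma main_key:
  fixes d j L l m n :: nat and la lb :: "nat \<Rightarrow> real" and v :: "nat \<Rightarrow> nat" and cs :: vcase
  assumes pos: "\<forall>k\<in>{1..d}. 0 < la k \<and> 0 < lb k"
    and adm: "admissible cs d la lb v"
    and j: "j \<in> {1..d}"
    and lL: "2 \<le> l" "l \<le> L"
    and mn: "m < n" "2 \<le> n - m"
  defines "W \<equiv> volj cs d v j L l n - volj cs d v j L l m"
  defines "P \<equiv> (\<Prod>k=1..d. max (1 + exp (-2*\<bar>ln (tla cs la lb v k)\<bar>)) (1 + exp (-2*\<bar>ln (tlb cs la lb v k)\<bar>)))"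
  shows "finite W \<and> P * (\<Sum>x\<in>W. lpow d la (\<lambda>k. 2 * x k) * lpow d lb (\<lambda>k. 2 * x k))
          \<le> (\<Sum>x\<in>W. lpow d la (\<lambda>k. 2 * x k)) * (\<Sum>x\<in>W. lpow d lb (\<lambda>k. 2 * x k))"
proof -
  define B where "B = box d (\<lambda>k. {cc j m k..ee j L l n k})"
  define Ta where "Ta y = (\<Prod>k=1..d. tla cs la lb v k powi (2 * y k))" for y :: "nat \<Rightarrow> int"
  define Tb where "Tb y = (\<Prod>k=1..d. tlb cs la lb v k powi (2 * y k))" for y :: "nat \<Rightarrow> int"
  have d1: "1 \<le> d" using j by auto
  have ce: "\<forall>k\<in>{1..d}. cc j m k < ee j L l n k"
    using lL mn by (auto simp: cc_def ee_def)
  have tpos: "\<forall>k\<in>{1..d}. 0 < tla cs la lb v k \<and> 0 < tlb cs la lb v k"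
  proof
    fix k assume k: "k \<in> {1..d}"
    have l1: "0 < la 1" "0 < lb 1" using pos d1 by auto
    show "0 < tla cs la lb v k \<and> 0 < tlb cs la lb v k"
    proof (cases cs)
      case Case1
      then show ?thesis using pos k l1 by auto
    next
      case Case2
      then have "2 \<le> d" using adm by simp
      then have "0 < lb 2" using pos by auto
      then show ?thesis using pos k l1 Case2 by auto
    qed
  qed
  have BI: "P * (\<Sum>y\<in>B. Ta y * Tb y) \<le> (\<Sum>y\<in>B. Ta y) * (\<Sum>y\<in>B. Tb y)"
    unfolding P_def B_def Ta_def Tb_def
    by (rule box_ineq) (use tpos ce in auto)
  have TaTb: "0 \<le> (\<Sum>y\<in>B. Ta y) * (\<Sum>y\<in>B. Tb y)"
    using tpos by (auto simp: Ta_def Tb_def intro!: mult_nonneg_nonneg sum_nonneg prod_nonneg)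
  have Pnn: "0 \<le> P" unfolding P_def
    by (rule prod_nonneg) (auto simp: le_max_iff_disj intro: add_nonneg_nonneg)
  have nzla: "\<forall>k\<in>{1..d}. la k \<noteq> 0" and nzlb: "\<forall>k\<in>{1..d}. lb k \<noteq> 0" using pos by auto
  show ?thesis
  proof (cases cs)
    case Case1
    have fin: "finite W" unfolding W_def Case1 by (rule case1_finite[OF j mn(1)])
    have ea: "lpow d la (\<lambda>k. 2 * U1 d v y k) = Ta y" for y
      unfolding lpow_def Ta_def Case1 using w1[OF d1 nzla, of "U1 d v y" v] by (simp add: TU1)
    have eb: "lpow d lb (\<lambda>k. 2 * U1 d v y k) = Tb y" for y
      unfolding lpow_def Tb_def Case1 using w1[OF d1 nzlb, of "U1 d v y" v] by (simp add: TU1)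
    have s: "(\<Sum>x\<in>W. g x) = (\<Sum>y\<in>B. g (U1 d v y))" for g
      unfolding W_def B_def Case1 by (rule case1_reindex[OF j mn(1)])
    show ?thesis using fin BI by (simp add: s ea eb)
  next
    case Case2
    have d2: "2 \<le> d" and la2: "la 2 = 1" and lb1: "lb 1 = 1" using adm Case2 by auto
    have fin: "finite W" unfolding W_def Case2 by (rule case2_finite[OF j mn(1) d2])
    define \<beta> where "\<beta> = lb 2 powi 2"
    have \<beta>: "0 \<le> \<beta>" unfolding \<beta>_def using pos d2 by auto
    have ea: "lpow d la (\<lambda>k. 2 * G2 d v p y k) = Ta y" for y p
      unfolding lpow_def Ta_def Case2 by (rule w2a[OF d2 la2 nzla])
    have eb0: "lpow d lb (\<lambda>k. 2 * G2 d v 0 y k) = Tb y" for y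
      unfolding lpow_def Tb_def Case2 using w2b[OF d2 lb1 nzlb, of v 0 y la] by simp
    have eb1: "lpow d lb (\<lambda>k. 2 * G2 d v 1 y k) = \<beta> * Tb y" for y
      unfolding lpow_def Tb_def Case2 \<beta>_def using w2b[OF d2 lb1 nzlb, of v 1 y la] by simp
    have s: "(\<Sum>x\<in>W. g x) = (\<Sum>y\<in>B. g (G2 d v 0 y)) + (\<Sum>y\<in>B. g (G2 d v 1 y))" for g
      unfolding W_def B_def Case2 by (rule case2_split[OF j mn(1) d2])
    have A: "(\<Sum>x\<in>W. lpow d la (\<lambda>k. 2 * x k)) = 2 * (\<Sum>y\<in>B. Ta y)" by (simp add: s ea)
    have Bs: "(\<Sum>x\<in>W. lpow d lb (\<lambda>k. 2 * x k)) = (1 + \<beta>) * (\<Sum>y\<in>B. Tb y)"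
      by (simp add: s eb0 eb1 sum_distrib_left[symmetric] algebra_simps)
    have D: "(\<Sum>x\<in>W. lpow d la (\<lambda>k. 2 * x k) * lpow d lb (\<lambda>k. 2 * x k)) = (1 + \<beta>) * (\<Sum>y\<in>B. Ta y * Tb y)"
    proof -
      have "(\<Sum>y\<in>B. Ta y * (\<beta> * Tb y)) = \<beta> * (\<Sum>y\<in>B. Ta y * Tb y)"
        by (simp add: sum_distrib_left mult_ac)
      then show ?thesis by (simp add: s ea eb0 eb1 algebra_simps)
    qed
    have "P * ((1 + \<beta>) * (\<Sum>y\<in>B. Ta y * Tb y)) = (1 + \<beta>) * (P * (\<Sum>y\<in>B. Ta y * Tb y))" by simp
    also have "\<dots> \<le> (1 + \<beta>) * ((\<Sum>y\<in>B. Ta y) * (\<Sum>y\<in>B. Tb y))"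
      using BI \<beta> by (intro mult_left_mono) auto
    also have "\<dots> \<le> 2 * ((1 + \<beta>) * ((\<Sum>y\<in>B. Ta y) * (\<Sum>y\<in>B. Tb y)))"
      using TaTb \<beta> by (simp add: mult_nonneg_nonneg)
    also have "\<dots> = 2 * (\<Sum>y\<in>B. Ta y) * ((1 + \<beta>) * (\<Sum>y\<in>B. Tb y))" by (simp add: mult_ac)
    finally show ?thesis using fin unfolding A Bs D by simp
  qed
qed

theorem lemma2:
  fixes d j L l m n :: nat and la lb :: "nat \<Rightarrow> real" and v :: "nat \<Rightarrow> nat" and cs :: vcase
  assumes pos: "\<forall>k\<in>{1..d}. 0 < la k \<and> 0 < lb k"
    and adm: "admissible cs d la lb v"
    and j: "j \<in> {1..d}"
    and lL: "2 \<le> l" "l \<le> L"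
    and mn: "m < n" "2 \<le> n - m"
  shows "Cab d la lb (volj cs d v j L l n - volj cs d v j L l m)
           \<le> Cs d la (volj cs d v j L l n - volj cs d v j L l m)
             * Cs d lb (volj cs d v j L l n - volj cs d v j L l m)
       \<and> Cs d la (volj cs d v j L l n - volj cs d v j L l m)
             * Cs d lb (volj cs d v j L l n - volj cs d v j L l m)
           \<le> ctilde cs d la lb v * Cab d la lb (volj cs d v j L l n - volj cs d v j L l m)"
proof -
  define W where "W = volj cs d v j L l n - volj cs d v j L l m"
  define P where "P = (\<Prod>k=1..d. max (1 + exp (-2*\<bar>ln (tla cs la lb v k)\<bar>)) (1 + exp (-2*\<bar>ln (tlb cs la lb v k)\<bar>)))"
  have K: "finite W \<and> P * (\<Sum>x\<in>W. lpow d la (\<lambda>k. 2 * x k) * lpow d lb (\<lambda>k. 2 * x k))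
          \<le> (\<Sum>x\<in>W. lpow d la (\<lambda>k. 2 * x k)) * (\<Sum>x\<in>W. lpow d lb (\<lambda>k. 2 * x k))"
    unfolding W_def P_def by (rule main_key[OF pos adm j lL mn])
  have d1: "1 \<le> d" using j by auto
  have P1: "1 < P" unfolding P_def
    by (rule Pgt1[OF d1]) (simp add: less_max_iff_disj)
  have nn: "\<forall>x\<in>W. 0 \<le> lpow d la (\<lambda>k. 2 * x k) \<and> 0 \<le> lpow d lb (\<lambda>k. 2 * x k)"
    using pos by (auto intro!: lpow_nn)
  have ct: "ctilde cs d la lb v = inverse (1 - inverse P)"
    unfolding ctilde_def P_def by simp
  show ?thesis
    using final_abs[OF conjunct1[OF K] nn P1 conjunct2[OF K]]
    unfolding Cab_def Cs_def ct W_def[symmetric] by simp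
qed

end
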